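(* Let $t$ be odd and $k=(t+1)/2$. For all $n\ge0$ and $m>nt$, $\mathcal{L}^{(t)}_L\big(L^{(t)}_m(x)L^{(t)}_n(x)\big)=0$, and \[ \mathcal{L}^{(t)}_L\big(L^{(t)}_{nt}(x)L^{(t)}_n(x)\big)=\prod_{i=0}^{n-1}\Big(\binom{(n-i)t}{t}\binom{t}{k}(k!)^2\Big)^2 . \]
   Context: Let $t\ge1$ be odd and $k=(t+1)/2$. In $K_{n,n}$, a $t$-path is a subgraph isomorphic to a path with $t$ edges. $L^{(t)}_n$ is the polynomial with $L^{(t)}_n(x^2)=\sum_F(-1)^{|F|}x^{\,2n-(t+1)|F|}$, the sum over all families $F$ of pairwise vertex-disjoint $t$-paths in $K_{n,n}$. Let $\mu^{(t)}_n$ be the number of coverings of all vertices of $K_{n,n}$ by pairwise vertex-disjoint $t$-paths ($\mu^{(t)}_0=1$), and let $\mathcal{L}^{(t)}_L$ be the linear functional with $\mathcal{L}^{(t)}_L(x^n)=\mu^{(t)}_n$. *)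

theory Defs
  imports "HOL-Computational_Algebra.Polynomial"
begin

text \<open>Vertices of K_{n,n}: Inl i (left part) and Inr j (right part), i, j < n.
  Edges are two-element vertex sets; a subgraph isomorphic to a path is identified
  with its edge set.\<close>

definition Kverts :: "nat \<Rightarrow> (nat + nat) set" where
  "Kverts n = Inl ` {..<n} \<union> Inr ` {..<n}"

definition Kadj :: "nat \<Rightarrow> nat + nat \<Rightarrow> nat + nat \<Rightarrow> bool" where
  "Kadj n u v = (\<exists>i<n. \<exists>j<n. (u = Inl i \<and> v = Inr j) \<or> (u = Inr j \<and> v = Inl i))"

definition tpaths :: "nat \<Rightarrow> nat \<Rightarrow> (nat + nat) set set set" where
  "tpaths t n = {P. \<exists>vs. length vs = Suc t \<and> distinct vs \<and>
      (\<forall>i<t. Kadj n (vs ! i) (vs ! Suc i)) \<and>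
      P = {{vs ! i, vs ! Suc i} | i. i < t}}"

definition pverts :: "(nat + nat) set set \<Rightarrow> (nat + nat) set" where
  "pverts P = \<Union>P"

definition tfamilies :: "nat \<Rightarrow> nat \<Rightarrow> (nat + nat) set set set set" where
  "tfamilies t n = {F. F \<subseteq> tpaths t n \<and>
      (\<forall>P\<in>F. \<forall>Q\<in>F. P \<noteq> Q \<longrightarrow> pverts P \<inter> pverts Q = {})}"

text \<open>L_n^{(t)}(y), where L_n^{(t)}(x^2) = sum_F (-1)^|F| x^(2n-(t+1)|F|),
  i.e. L_n^{(t)}(y) = sum_F (-1)^|F| y^(n - k|F|) with k = (t+1)/2.\<close>
definition Lpoly :: "nat \<Rightarrow> nat \<Rightarrow> int poly" where
  "Lpoly t n = (\<Sum>F\<in>tfamilies t n. (-1) ^ card F * [:0, 1:] ^ (n - ((t + 1) div 2) * card F))"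

definition mu :: "nat \<Rightarrow> nat \<Rightarrow> nat" where
  "mu t n = card {F \<in> tfamilies t n. (\<Union>P\<in>F. pverts P) = Kverts n}"

definition LL :: "nat \<Rightarrow> int poly \<Rightarrow> int" where
  "LL t p = (\<Sum>i\<le>degree p. coeff p i * int (mu t i))"

end

theory Submission
  imports Defs
begin


fun pe :: "'a list \<Rightarrow> 'a set set" where
  "pe (a # b # xs) = insert {a, b} (pe (b # xs))"
| "pe _ = {}"

lemma pe_nth: "pe vs = {{vs ! i, vs ! Suc i} | i. Suc i < length vs}"
proof (induction vs rule: pe.induct)
  case (1 a b xs)
  have "{{(a # b # xs) ! i, (a # b # xs) ! Suc i} | i. Suc i < length (a # b # xs)}
      = insert {a,b} {{(b # xs) ! i, (b # xs) ! Suc i} | i. Suc i < length (b # xs)}"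
    (is "?L = ?R")
  proof
    show "?L \<subseteq> ?R"
    proof
      fix e assume "e \<in> ?L"
      then obtain i where e: "e = {(a # b # xs) ! i, (a # b # xs) ! Suc i}" "Suc i < length (a # b # xs)" by blast
      show "e \<in> ?R"
      proof (cases i)
        case 0 then show ?thesis using e by simp
      next
        case (Suc i') then show ?thesis using e by auto
      qed
    qed
  next
    show "?R \<subseteq> ?L"
    proof
      fix e assume "e \<in> ?R"
      then consider "e = {a,b}" | i where "e = {(b # xs) ! i, (b # xs) ! Suc i}" "Suc i < length (b # xs)" by blast
      then show "e \<in> ?L"
      proof cases
        case 1 then show ?thesis by (rule_tac CollectI, rule_tac x=0 in exI) simp
      next
        case 2 then show ?thesis by (rule_tac CollectI, rule_tac x="Suc i" in exI) simp
      qed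
    qed
  qed
  then show ?case using 1 by simp
next
  case "2_1" then show ?case by simp
next
  case "2_2" then show ?case by simp
qed

lemma pe_sub: "e \<in> pe vs \<Longrightarrow> e \<subseteq> set vs"
  by (induction vs rule: pe.induct) auto

lemma pe_verts: "Suc 0 < length vs \<Longrightarrow> \<Union>(pe vs) = set vs"
proof (induction vs rule: pe.induct)
  case (1 a b xs)
  then show ?case by (cases xs) auto
qed auto

lemma pe_snoc: "pe (xs @ [y]) = (if xs = [] then {} else insert {last xs, y} (pe xs))"
proof (induction xs rule: pe.induct)
  case (1 a b xs) then show ?case by auto
next
  case ("2_2" v) then show ?case by simp
qed simp

lemma pe_rev: "pe (rev vs) = pe vs"
proof (induction vs)
  case (Cons a xs)
  have "pe (rev (a#xs)) = pe (rev xs @ [a])" by simp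
  also have "\<dots> = (if xs = [] then {} else insert {hd xs, a} (pe xs))"
    using Cons by (simp add: pe_snoc last_rev)
  also have "\<dots> = pe (a#xs)" by (cases xs) (simp_all add: insert_commute)
  finally show ?case .
qed simp

lemma pe_hd_edges:
  assumes "distinct (a # b # xs)"
  shows "{e \<in> pe (a # b # xs). a \<in> e} = {{a, b}}"
  using assms pe_sub[of _ "b # xs"] by auto

lemma pe_two_edges:
  assumes "distinct vs" "x \<in> set vs" "x \<noteq> hd vs" "x \<noteq> last vs"
  shows "\<exists>e1\<in>pe vs. \<exists>e2\<in>pe vs. e1 \<noteq> e2 \<and> x \<in> e1 \<and> x \<in> e2"
  using assms
proof (induction vs rule: pe.induct)
  case (1 a b xs)
  show ?case
  proof (cases "x = b")
    case True
    with 1 have "xs \<noteq> []" by auto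
    then obtain c ys where xs: "xs = c # ys" by (cases xs) auto
    have "{a,b} \<noteq> {b,c}" using 1(2) xs by (auto simp: doubleton_eq_iff)
    then show ?thesis using True xs by auto
  next
    case False
    with 1 have "\<exists>e1\<in>pe (b#xs). \<exists>e2\<in>pe (b#xs). e1 \<noteq> e2 \<and> x \<in> e1 \<and> x \<in> e2"
      by (intro 1(1)) auto
    then show ?thesis by auto
  qed
qed auto

lemma pe_uniq:
  assumes "distinct vs" "distinct ws" "pe vs = pe ws" "vs \<noteq> []" "ws \<noteq> []" "hd vs = hd ws"
  shows "vs = ws"
  using assms
proof (induction vs arbitrary: ws rule: pe.induct)
  case (1 a b xs)
  have "pe ws \<noteq> {}" using 1(4) by (metis insert_not_empty pe.simps(1))
  then obtain c ys where ws: "ws = a # c # ys" using 1(7)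
    by (cases ws rule: pe.cases) auto
  have A: "{e \<in> pe ws. a \<in> e} = {{a, b}}" using pe_hd_edges[OF 1(2)] 1(4) by (simp only:)
  have B: "{e \<in> pe ws. a \<in> e} = {{a, c}}" using pe_hd_edges[of a c ys] 1(3) ws by (simp only:)
  from A B have "{a,b} = {a,c}" by simp
  then have bc: "b = c" using 1(2) by (auto simp: doubleton_eq_iff)
  have "{a,b} \<notin> pe (b # xs)" using pe_sub[of "{a,b}" "b#xs"] 1(2) by auto
  moreover have "{a,c} \<notin> pe (c # ys)" using pe_sub[of "{a,c}" "c#ys"] 1(3) ws by auto
  ultimately have "pe (b # xs) = pe (c # ys)" using 1(4) ws bc
    by (metis Diff_insert_absorb pe.simps(1))
  then have "b # xs = c # ys" using 1 ws bc by (intro 1(1)) auto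
  then show ?case using ws by simp
next
  case ("2_1") then show ?case by simp
next
  case ("2_2" v)
  then show ?case by (cases ws rule: pe.cases) auto
qed



fun ilv :: "nat list \<Rightarrow> nat list \<Rightarrow> (nat + nat) list" where
  "ilv (a # as) (b # bs) = Inl a # Inr b # ilv as bs"
| "ilv _ _ = []"

lemma ilv_len: "length ls = length rs \<Longrightarrow> length (ilv ls rs) = 2 * length ls"
  by (induction ls rs rule: ilv.induct) auto

lemma ilv_set: "length ls = length rs \<Longrightarrow> set (ilv ls rs) = Inl ` set ls \<union> Inr ` set rs"
  by (induction ls rs rule: ilv.induct) auto

lemma ilv_distinct: "length ls = length rs \<Longrightarrow> distinct (ilv ls rs) \<longleftrightarrow> distinct ls \<and> distinct rs"
  by (induction ls rs rule: ilv.induct) (auto simp: ilv_set)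

lemma ilv_inj: "length ls = length rs \<Longrightarrow> length ls' = length rs' \<Longrightarrow> ilv ls rs = ilv ls' rs'
   \<Longrightarrow> ls = ls' \<and> rs = rs'"
proof (induction ls rs arbitrary: ls' rs' rule: ilv.induct)
  case (1 a as b bs)
  then show ?case by (cases "(ls', rs')" rule: ilv.cases) auto
next
  case ("2_1" v)
  then show ?case by (cases "(ls', rs')" rule: ilv.cases) auto
next
  case ("2_2" v)
  then show ?case by (cases "(ls', rs')" rule: ilv.cases) auto
qed

lemma ilv_hd: "ls \<noteq> [] \<Longrightarrow> length ls = length rs \<Longrightarrow> hd (ilv ls rs) = Inl (hd ls)"
  by (cases "(ls, rs)" rule: ilv.cases) auto

lemma ilv_last: "ls \<noteq> [] \<Longrightarrow> length ls = length rs \<Longrightarrow> last (ilv ls rs) = Inr (last rs)"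
proof (induction ls rs rule: ilv.induct)
  case (1 a as b bs)
  then show ?case by (cases as; cases bs) auto
qed auto

lemma Kadj_isl: "Kadj n u v \<Longrightarrow> isl u \<noteq> isl v"
  by (auto simp: Kadj_def)

lemma Kadj_sym: "Kadj n u v = Kadj n v u"
  by (auto simp: Kadj_def)

lemma Kadj_LR: "Kadj n (Inl a) (Inr b) \<longleftrightarrow> a < n \<and> b < n"
  by (auto simp: Kadj_def)

lemma Kadj_RL: "Kadj n (Inr b) (Inl a) \<longleftrightarrow> a < n \<and> b < n"
  by (auto simp: Kadj_def)

lemma ilv_succ: "length ls = length rs \<Longrightarrow> set ls \<subseteq> {..<n} \<Longrightarrow> set rs \<subseteq> {..<n}
   \<Longrightarrow> successively (Kadj n) (ilv ls rs)"
proof (induction ls rs rule: ilv.induct)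
  case (1 a as b bs)
  then show ?case by (cases "(as, bs)" rule: ilv.cases) (auto simp: Kadj_LR Kadj_RL)
qed auto

lemma succ_decomp:
  "successively (Kadj n) vs \<Longrightarrow> even (length vs) \<Longrightarrow> (vs \<noteq> [] \<Longrightarrow> isl (hd vs)) \<Longrightarrow>
   \<exists>ls rs. vs = ilv ls rs \<and> length ls = length rs \<and> 2 * length ls = length vs \<and>
           set ls \<subseteq> {..<n} \<and> set rs \<subseteq> {..<n}"
proof (induction vs rule: induct_list012)
  case (3 a b xs)
  have ab: "Kadj n a b" and sx: "successively (Kadj n) (b # xs)" using 3(3) by auto
  obtain x where a: "a = Inl x" using 3(5) by (cases a) auto
  obtain y where b: "b = Inr y" using ab a by (cases b) (auto simp: Kadj_def)
  have xy: "x < n" "y < n" using ab a b Kadj_LR by auto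
  have "successively (Kadj n) xs" using sx by (cases xs) auto
  moreover have "even (length xs)" using 3(4) by simp
  moreover have "isl (hd xs)" if "xs \<noteq> []"
  proof -
    have "Kadj n b (hd xs)" using sx that by (cases xs) auto
    then show ?thesis using b Kadj_isl by fastforce
  qed
  ultimately obtain ls rs where "xs = ilv ls rs" "length ls = length rs" "2 * length ls = length xs"
       "set ls \<subseteq> {..<n}" "set rs \<subseteq> {..<n}" using 3(1) by blast
  then show ?case using a b xy
    by (rule_tac x="x # ls" in exI, rule_tac x="y # rs" in exI) auto
next
  case 1 then show ?case by (rule_tac x="[]" in exI, rule_tac x="[]" in exI) auto
next
  case (2 v) then show ?case by simp
qed

lemma succ_last:
  "successively (Kadj n) vs \<Longrightarrow> even (length vs) \<Longrightarrow> vs \<noteq> [] \<Longrightarrow> isl (last vs) = (\<not> isl (hd vs))"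
proof (induction vs rule: induct_list012)
  case (3 a b xs)
  have ab: "isl a \<noteq> isl b" using 3(3) Kadj_isl by auto
  show ?case
  proof (cases xs)
    case Nil then show ?thesis using ab by simp
  next
    case (Cons c ys)
    have "successively (Kadj n) xs" using 3(3) Cons by auto
    moreover have "isl b \<noteq> isl c" using 3(3) Cons Kadj_isl by auto
    moreover have "even (length xs)" using 3(4) by simp
    ultimately have "isl (last xs) = (\<not> isl c)" using 3(1) Cons by auto
    then show ?thesis using Cons ab \<open>isl b \<noteq> isl c\<close> by auto
  qed
qed auto

definition PS :: "nat \<Rightarrow> nat \<Rightarrow> (nat list \<times> nat list) set" where
  "PS n k = {(ls, rs). length ls = k \<and> length rs = k \<and> distinct ls \<and> distinct rs \<and>
              set ls \<subseteq> {..<n} \<and> set rs \<subseteq> {..<n}}"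

definition pth :: "nat list \<times> nat list \<Rightarrow> (nat + nat) set set" where
  "pth p = pe (ilv (fst p) (snd p))"

lemma pe_nth_t: "length vs = Suc t \<Longrightarrow> {{vs ! i, vs ! Suc i} | i. i < t} = pe vs"
  by (simp add: pe_nth)

lemma succ_t: "length vs = Suc t \<Longrightarrow> (\<forall>i<t. Kadj n (vs!i) (vs!Suc i)) = successively (Kadj n) vs"
  by (simp add: successively_conv_nth)

lemma tpaths_alt: "tpaths t n = {P. \<exists>vs. length vs = Suc t \<and> distinct vs \<and>
      successively (Kadj n) vs \<and> P = pe vs}"
proof -
  have "(length vs = Suc t \<and> distinct vs \<and> (\<forall>i<t. Kadj n (vs!i) (vs!Suc i)) \<and>
          P = {{vs ! i, vs ! Suc i} | i. i < t}) =
        (length vs = Suc t \<and> distinct vs \<and> successively (Kadj n) vs \<and> P = pe vs)" for vs P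
    using pe_nth_t[of vs t] succ_t[of vs t n] by blast
  then show ?thesis unfolding tpaths_def by simp
qed

lemma tpaths_char:
  assumes "Suc t = 2 * k"
  shows "tpaths t n = pth ` PS n k"
proof
  show "pth ` PS n k \<subseteq> tpaths t n"
  proof
    fix P assume "P \<in> pth ` PS n k"
    then obtain ls rs where p: "(ls, rs) \<in> PS n k" "P = pth (ls, rs)" by auto
    then show "P \<in> tpaths t n" unfolding tpaths_alt pth_def PS_def using assms
      by (intro CollectI exI[of _ "ilv ls rs"]) (auto simp: ilv_len ilv_distinct ilv_succ)
  qed
next
  show "tpaths t n \<subseteq> pth ` PS n k"
  proof
    fix P assume "P \<in> tpaths t n"
    then obtain vs where vs: "length vs = Suc t" "distinct vs" "successively (Kadj n) vs" "P = pe vs"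
      unfolding tpaths_alt by blast
    have ne: "vs \<noteq> []" using vs by auto
    obtain ws where ws: "length ws = Suc t" "distinct ws" "successively (Kadj n) ws" "P = pe ws"
      "isl (hd ws)"
    proof (cases "isl (hd vs)")
      case True then show ?thesis using vs that by blast
    next
      case False
      have "even (length vs)" using vs(1) assms by simp
      then have "isl (last vs)" using succ_last[OF vs(3)] ne False by simp
      moreover have "successively (Kadj n) (rev vs)" using vs(3) Kadj_sym by simp
      ultimately show ?thesis using vs that[of "rev vs"] ne by (simp add: pe_rev hd_rev)
    qed
    obtain ls rs where d: "ws = ilv ls rs" "length ls = length rs" "2 * length ls = length ws"
           "set ls \<subseteq> {..<n}" "set rs \<subseteq> {..<n}"
    proof -
      have "even (length ws)" using ws(1) assms by simp
      then show ?thesis using succ_decomp[OF ws(3)] ws(5) that by blast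
    qed
    have "(ls, rs) \<in> PS n k" using d ws assms by (auto simp: PS_def ilv_distinct)
    moreover have "P = pth (ls, rs)" using d ws by (simp add: pth_def)
    ultimately show "P \<in> pth ` PS n k" by blast
  qed
qed

lemma pth_verts:
  assumes "(ls, rs) \<in> PS n k" "k \<ge> 1"
  shows "pverts (pth (ls, rs)) = Inl ` set ls \<union> Inr ` set rs"
  using assms unfolding pverts_def pth_def PS_def
  by (subst pe_verts) (auto simp: ilv_len ilv_set)

lemma pth_inj:
  assumes "k \<ge> 1"
  shows "inj_on pth (PS n k)"
proof (rule inj_onI)
  fix p q assume p: "p \<in> PS n k" and q: "q \<in> PS n k" and e: "pth p = pth q"
  obtain ls rs where pp: "p = (ls, rs)" by (cases p)
  obtain ls' rs' where qq: "q = (ls', rs')" by (cases q)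
  define vs where "vs = ilv ls rs"
  define ws where "ws = ilv ls' rs'"
  have L: "length ls = k" "length rs = k" "length ls' = k" "length rs' = k"
    using p q pp qq by (auto simp: PS_def)
  have dv: "distinct vs" "distinct ws" using p q pp qq by (auto simp: PS_def vs_def ws_def ilv_distinct)
  have E: "pe vs = pe ws" using e pp qq by (simp add: pth_def vs_def ws_def)
  have ne: "ls \<noteq> []" "ls' \<noteq> []" "rs \<noteq> []" "rs' \<noteq> []" using L assms by auto
  obtain a as' b bs' where ls': "ls' = a # as'" and rs': "rs' = b # bs'" using ne
    by (cases ls'; cases rs') auto
  have ws: "ws = Inl a # Inr b # ilv as' bs'" by (simp add: ws_def ls' rs')
  have hw: "{e \<in> pe ws. Inl a \<in> e} = {{Inl a, Inr b}}"
    unfolding ws by (rule pe_hd_edges) (use dv ws in simp)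
  have inv: "Inl a \<in> set vs"
  proof -
    have "{Inl a, Inr b} \<in> pe vs" using hw E by blast
    then show ?thesis using pe_sub by blast
  qed
  have hv: "hd vs = Inl a"
  proof (rule ccontr)
    assume nh: "hd vs \<noteq> Inl a"
    have "last vs = Inr (last rs)" unfolding vs_def using ilv_last ne L by simp
    then have "Inl a \<noteq> last vs" by simp
    have "\<exists>e1\<in>pe vs. \<exists>e2\<in>pe vs. e1 \<noteq> e2 \<and> Inl a \<in> e1 \<and> Inl a \<in> e2"
      by (rule pe_two_edges[OF dv(1) inv]) (use nh \<open>Inl a \<noteq> last vs\<close> in auto)
    then obtain e1 e2 where "e1\<in>pe ws" "e2 \<in> pe ws" "e1\<noteq>e2" "Inl a\<in>e1" "Inl a\<in>e2" using E by auto
    then have "e1 \<in> {e\<in>pe ws. Inl a \<in> e}" "e2 \<in> {e\<in>pe ws. Inl a \<in> e}" by auto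
    then show False using hw \<open>e1\<noteq>e2\<close> by simp
  qed
  have "hd ws = Inl a" using ws by simp
  moreover have "vs \<noteq> []" using ne(1) unfolding vs_def by (cases ls; cases rs) (use L in auto)
  moreover have "ws \<noteq> []" using ws by simp
  ultimately have "vs = ws" using pe_uniq[OF dv E] hv by simp
  then have "ilv ls rs = ilv ls' rs'" by (simp add: vs_def ws_def)
  then have "ls = ls' \<and> rs = rs'" by (rule ilv_inj[rotated 2]) (use L in auto)
  then show "p = q" using pp qq by simp
qed



definition ff :: "nat \<Rightarrow> nat \<Rightarrow> nat" where
  "ff n r = (\<Prod>i<r. (n - i))"

lemma ff_Suc: "ff n (Suc r) = ff n r * (n - r)"
  by (simp add: ff_def)

lemma ff_0[simp]: "ff n 0 = 1" by (simp add: ff_def)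

lemma ff_zero: "n < r \<Longrightarrow> ff n r = 0"
  unfolding ff_def by (rule prod_zero) auto

lemma ff_add: "ff n (a + b) = ff n a * ff (n - a) b"
  by (induction b) (simp_all add: ff_Suc diff_diff_add)

lemma ff_fact: "ff n n = fact n"
proof -
  have "ff n r * fact (n - r) = fact n" if "r \<le> n" for r
    using that
  proof (induction r)
    case (Suc r)
    have e: "n - r = Suc (n - Suc r)" using Suc.prems by simp
    have "fact (n - r) = (n - r) * fact (n - Suc r)" unfolding e by simp
    then show ?case using Suc by (simp add: ff_Suc)
  qed simp
  from this[of n] show ?thesis by simp
qed

lemma prod_interval_ff: "r \<le> m \<Longrightarrow> \<Prod>{m - r + 1..m} = ff m r"
proof (induction r)
  case (Suc r)
  have "{m - Suc r + 1..m} = insert (m - r) {m - r + 1..m}" using Suc.prems by auto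
  then show ?case using Suc by (simp add: ff_Suc mult.commute)
qed simp

lemma lists_count:
  assumes "finite A"
  shows "card {xs. length xs = r \<and> distinct xs \<and> set xs \<subseteq> A} = ff (card A) r"
proof (cases "r \<le> card A")
  case True
  then show ?thesis using card_lists_distinct_length_eq[OF assms True] prod_interval_ff by simp
next
  case False
  have e: "{xs. length xs = r \<and> distinct xs \<and> set xs \<subseteq> A} = {}"
  proof -
    have "length xs \<le> card A" if "distinct xs" "set xs \<subseteq> A" for xs
      using that card_mono[OF assms] distinct_card by metis
    then show ?thesis using False by auto
  qed
  show ?thesis unfolding e using ff_zero[of "card A" r] False by simp
qed

lemma PS_restrict_count:
  assumes "A \<subseteq> {..<n}" "B \<subseteq> {..<n}"
  shows "card {p \<in> PS n k. set (fst p) \<subseteq> A \<and> set (snd p) \<subseteq> B} = ff (card A) k * ff (card B) k"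
proof -
  have fA: "finite A" "finite B" using assms finite_subset by auto
  have "{p \<in> PS n k. set (fst p) \<subseteq> A \<and> set (snd p) \<subseteq> B} =
        {xs. length xs = k \<and> distinct xs \<and> set xs \<subseteq> A} \<times> {xs. length xs = k \<and> distinct xs \<and> set xs \<subseteq> B}"
    using assms by (auto simp: PS_def)
  then show ?thesis by (simp add: card_cartesian_product lists_count[OF fA(1)] lists_count[OF fA(2)])
qed

lemma PS_finite: "finite (PS n k)"
proof -
  have "PS n k \<subseteq> {xs. set xs \<subseteq> {..<n} \<and> length xs = k} \<times> {xs. set xs \<subseteq> {..<n} \<and> length xs = k}"
    by (auto simp: PS_def)
  moreover have "finite ({xs. set xs \<subseteq> {..<n} \<and> length xs = k} \<times> {xs. set xs \<subseteq> {..<n} \<and> length xs = k})"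
    using finite_lists_length_eq[of "{..<n}" k] by simp
  ultimately show ?thesis using finite_subset by blast
qed

locale tk =
  fixes t k :: nat
  assumes tk: "Suc t = 2 * k"
begin

lemma k_pos: "k \<ge> 1" using tk by simp

lemma tpaths_finite: "finite (tpaths t n)"
  using tpaths_char[OF tk] PS_finite by simp

lemma tfam_finite: "finite (tfamilies t n)"
proof -
  have "tfamilies t n \<subseteq> Pow (tpaths t n)" by (auto simp: tfamilies_def)
  then show ?thesis using tpaths_finite finite_subset by blast
qed

lemma tfam_elem_finite: "F \<in> tfamilies t n \<Longrightarrow> finite F"
  using tpaths_finite finite_subset by (auto simp: tfamilies_def)

lemma tpath_parts:
  assumes "P \<in> tpaths t n"
  shows "card {i. Inl i \<in> pverts P} = k" "{i. Inl i \<in> pverts P} \<subseteq> {..<n}"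
        "card {i. Inr i \<in> pverts P} = k" "{i. Inr i \<in> pverts P} \<subseteq> {..<n}"
        "pverts P \<subseteq> Kverts n" "pverts P \<noteq> {}"
proof -
  obtain ls rs where p: "(ls, rs) \<in> PS n k" "P = pth (ls, rs)"
    using assms tpaths_char[OF tk] by auto
  have v: "pverts P = Inl ` set ls \<union> Inr ` set rs" using pth_verts[OF p(1) k_pos] p by simp
  have l: "{i. Inl i \<in> pverts P} = set ls" "{i. Inr i \<in> pverts P} = set rs" using v by auto
  have pp: "length ls = k" "length rs = k" "distinct ls" "distinct rs" "set ls \<subseteq> {..<n}" "set rs \<subseteq> {..<n}"
    using p(1) by (auto simp: PS_def)
  show "card {i. Inl i \<in> pverts P} = k" "{i. Inl i \<in> pverts P} \<subseteq> {..<n}"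
        "card {i. Inr i \<in> pverts P} = k" "{i. Inr i \<in> pverts P} \<subseteq> {..<n}"
    using l pp distinct_card[of ls] distinct_card[of rs] by auto
  show "pverts P \<subseteq> Kverts n" using v pp by (auto simp: Kverts_def)
  show "pverts P \<noteq> {}" using v pp k_pos by (cases ls) auto
qed

definition UF :: "(nat + nat) set set set \<Rightarrow> (nat + nat) set" where
  "UF F = (\<Union>P\<in>F. pverts P)"

lemma fam_parts:
  assumes "F \<in> tfamilies t n"
  shows "card {i. Inl i \<in> UF F} = k * card F" "{i. Inl i \<in> UF F} \<subseteq> {..<n}"
        "card {i. Inr i \<in> UF F} = k * card F" "{i. Inr i \<in> UF F} \<subseteq> {..<n}"
        "UF F \<subseteq> Kverts n"
proof -
  have fin: "finite F" using tfam_elem_finite[OF assms] .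
  have sub: "F \<subseteq> tpaths t n" and dis: "\<forall>P\<in>F. \<forall>Q\<in>F. P \<noteq> Q \<longrightarrow> pverts P \<inter> pverts Q = {}"
    using assms by (auto simp: tfamilies_def)
  have e1: "{i. Inl i \<in> UF F} = (\<Union>P\<in>F. {i. Inl i \<in> pverts P})" by (auto simp: UF_def)
  have e2: "{i. Inr i \<in> UF F} = (\<Union>P\<in>F. {i. Inr i \<in> pverts P})" by (auto simp: UF_def)
  have "card (\<Union>P\<in>F. {i. Inl i \<in> pverts P}) = (\<Sum>P\<in>F. card {i. Inl i \<in> pverts P})"
  proof (rule card_UN_disjoint[OF fin])
    show "\<forall>P\<in>F. finite {i. Inl i \<in> pverts P}" using tpath_parts(2) sub finite_subset by blast
    show "\<forall>P\<in>F. \<forall>Q\<in>F. P \<noteq> Q \<longrightarrow> {i. Inl i \<in> pverts P} \<inter> {i. Inl i \<in> pverts Q} = {}"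
    proof (intro ballI impI)
      fix P Q assume "P \<in> F" "Q \<in> F" "P \<noteq> Q"
      then have "pverts P \<inter> pverts Q = {}" using dis by blast
      then show "{i. Inl i \<in> pverts P} \<inter> {i. Inl i \<in> pverts Q} = {}" by auto
    qed
  qed
  also have "\<dots> = (\<Sum>P\<in>F. k)" using tpath_parts(1) sub by (intro sum.cong) auto
  also have "\<dots> = k * card F" by simp
  finally show "card {i. Inl i \<in> UF F} = k * card F" using e1 by simp
  have "card (\<Union>P\<in>F. {i. Inr i \<in> pverts P}) = (\<Sum>P\<in>F. card {i. Inr i \<in> pverts P})"
  proof (rule card_UN_disjoint[OF fin])
    show "\<forall>P\<in>F. finite {i. Inr i \<in> pverts P}" using tpath_parts(4) sub finite_subset by blast
    show "\<forall>P\<in>F. \<forall>Q\<in>F. P \<noteq> Q \<longrightarrow> {i. Inr i \<in> pverts P} \<inter> {i. Inr i \<in> pverts Q} = {}"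
    proof (intro ballI impI)
      fix P Q assume "P \<in> F" "Q \<in> F" "P \<noteq> Q"
      then have "pverts P \<inter> pverts Q = {}" using dis by blast
      then show "{i. Inr i \<in> pverts P} \<inter> {i. Inr i \<in> pverts Q} = {}" by auto
    qed
  qed
  also have "\<dots> = (\<Sum>P\<in>F. k)" using tpath_parts(3) sub by (intro sum.cong) auto
  also have "\<dots> = k * card F" by simp
  finally show "card {i. Inr i \<in> UF F} = k * card F" using e2 by simp
  show "{i. Inl i \<in> UF F} \<subseteq> {..<n}"
    unfolding e1 using tpath_parts(2) sub by (intro UN_least) auto
  show "{i. Inr i \<in> UF F} \<subseteq> {..<n}"
    unfolding e2 using tpath_parts(4) sub by (intro UN_least) auto
  show "UF F \<subseteq> Kverts n" unfolding UF_def using tpath_parts(5) sub by (intro UN_least) auto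
qed

end


context tk begin

definition Avoid :: "nat \<Rightarrow> (nat + nat) set \<Rightarrow> (nat + nat) set set set" where
  "Avoid n W = {P \<in> tpaths t n. pverts P \<inter> W = {}}"

lemma Avoid_card: "card (Avoid n W) = ff (card {i. i < n \<and> Inl i \<notin> W}) k * ff (card {i. i < n \<and> Inr i \<notin> W}) k"
proof -
  let ?A = "{i. i < n \<and> Inl i \<notin> W}" and ?B = "{i. i < n \<and> Inr i \<notin> W}"
  have "Avoid n W = pth ` {p \<in> PS n k. set (fst p) \<subseteq> ?A \<and> set (snd p) \<subseteq> ?B}"
  proof -
    have iff: "pverts (pth p) \<inter> W = {} \<longleftrightarrow> set (fst p) \<subseteq> ?A \<and> set (snd p) \<subseteq> ?B" if "p \<in> PS n k" for p
    proof -
      obtain ls rs where pp: "p = (ls, rs)" by (cases p)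
      have "pverts (pth p) = Inl ` set ls \<union> Inr ` set rs" using pth_verts[OF _ k_pos] that pp by simp
      moreover have "set ls \<subseteq> {..<n}" "set rs \<subseteq> {..<n}" using that pp by (auto simp: PS_def)
      ultimately show ?thesis using pp by auto
    qed
    have g: "{P \<in> pth ` PS n k. pverts P \<inter> W = {}} = pth ` {p \<in> PS n k. pverts (pth p) \<inter> W = {}}" by auto
    have h: "{p \<in> PS n k. pverts (pth p) \<inter> W = {}} = {p \<in> PS n k. set (fst p) \<subseteq> ?A \<and> set (snd p) \<subseteq> ?B}"
    proof (rule Collect_cong)
      fix p show "(p \<in> PS n k \<and> pverts (pth p) \<inter> W = {}) = (p \<in> PS n k \<and> set (fst p) \<subseteq> ?A \<and> set (snd p) \<subseteq> ?B)"
      proof (cases "p \<in> PS n k")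
        case True then show ?thesis using iff[OF True] by simp
      qed simp
    qed
    show ?thesis unfolding Avoid_def tpaths_char[OF tk] g h by (rule refl)
  qed
  moreover have "inj_on pth {p \<in> PS n k. set (fst p) \<subseteq> ?A \<and> set (snd p) \<subseteq> ?B}"
    using pth_inj[OF k_pos] by (rule inj_on_subset) auto
  ultimately have "card (Avoid n W) = card {p \<in> PS n k. set (fst p) \<subseteq> ?A \<and> set (snd p) \<subseteq> ?B}"
    by (simp add: card_image)
  also have "\<dots> = ff (card ?A) k * ff (card ?B) k" by (rule PS_restrict_count) auto
  finally show ?thesis .
qed

definition Fam :: "nat \<Rightarrow> nat \<Rightarrow> (nat + nat) set set set set" where
  "Fam n j = {F \<in> tfamilies t n. card F = j}"

lemma Fam_finite: "finite (Fam n j)" using tfam_finite by (simp add: Fam_def)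

lemma Fam_0: "Fam n 0 = {{}}"
proof -
  have "{} \<in> tfamilies t n" by (simp add: tfamilies_def)
  moreover have "F \<in> tfamilies t n \<Longrightarrow> card F = 0 \<Longrightarrow> F = {}" for F
    using tfam_elem_finite by auto
  ultimately show ?thesis unfolding Fam_def by auto
qed

lemma Avoid_fam_card:
  assumes "G \<in> Fam n j"
  shows "card (Avoid n (UF G)) = ff (n - k * j) k ^ 2"
proof -
  have G: "G \<in> tfamilies t n" "card G = j" using assms by (auto simp: Fam_def)
  have "{i. i < n \<and> Inl i \<notin> UF G} = {..<n} - {i. Inl i \<in> UF G}" by auto
  then have a: "card {i. i < n \<and> Inl i \<notin> UF G} = n - k * j"
    using fam_parts[OF G(1)] G(2) by (simp add: card_Diff_subset finite_subset)
  have "{i. i < n \<and> Inr i \<notin> UF G} = {..<n} - {i. Inr i \<in> UF G}" by auto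
  then have b: "card {i. i < n \<and> Inr i \<notin> UF G} = n - k * j"
    using fam_parts[OF G(1)] G(2) by (simp add: card_Diff_subset finite_subset)
  show ?thesis using Avoid_card a b by (simp add: power2_eq_square)
qed

lemma Fam_rec: "Suc j * card (Fam n (Suc j)) = card (Fam n j) * ff (n - k * j) k ^ 2"
proof -
  define X where "X = (SIGMA F:Fam n (Suc j). F)"
  define Y where "Y = (SIGMA G:Fam n j. Avoid n (UF G))"
  define f where "f = (\<lambda>(F, P). (F - {P}, P :: (nat + nat) set set))"
  have cX: "card X = Suc j * card (Fam n (Suc j))"
  proof -
    have "card X = (\<Sum>F\<in>Fam n (Suc j). card F)" unfolding X_def
      by (rule card_SigmaI[OF Fam_finite]) (auto simp: Fam_def tfam_elem_finite)
    also have "\<dots> = (\<Sum>F\<in>Fam n (Suc j). Suc j)" by (rule sum.cong) (auto simp: Fam_def)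
    finally show ?thesis by simp
  qed
  have cY: "card Y = card (Fam n j) * ff (n - k * j) k ^ 2"
  proof -
    have "card Y = (\<Sum>G\<in>Fam n j. card (Avoid n (UF G)))" unfolding Y_def
      by (rule card_SigmaI) (auto simp: Fam_finite Avoid_def tpaths_finite)
    also have "\<dots> = (\<Sum>G\<in>Fam n j. ff (n - k * j) k ^ 2)" by (rule sum.cong) (auto simp: Avoid_fam_card)
    finally show ?thesis by simp
  qed
  have inj: "inj_on f X"
  proof (rule inj_onI)
    fix x y assume "x \<in> X" "y \<in> X" "f x = f y"
    then show "x = y" unfolding X_def f_def by (cases x; cases y) auto
  qed
  have img: "f ` X = Y"
  proof
    show "f ` X \<subseteq> Y"
    proof
      fix z assume "z \<in> f ` X"
      then obtain F P where FP: "F \<in> Fam n (Suc j)" "P \<in> F" "z = (F - {P}, P)"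
        unfolding X_def f_def by auto
      have F: "F \<in> tfamilies t n" "card F = Suc j" using FP by (auto simp: Fam_def)
      have fin: "finite F" using tfam_elem_finite[OF F(1)] .
      have "F - {P} \<in> tfamilies t n" using F(1) by (auto simp: tfamilies_def)
      moreover have "card (F - {P}) = j" using F fin FP by simp
      moreover have "P \<in> Avoid n (UF (F - {P}))"
        using F(1) FP by (auto simp: tfamilies_def Avoid_def UF_def)
      ultimately show "z \<in> Y" using FP unfolding Y_def Fam_def by auto
    qed
  next
    show "Y \<subseteq> f ` X"
    proof
      fix z assume "z \<in> Y"
      then obtain G P where GP: "G \<in> Fam n j" "P \<in> Avoid n (UF G)" "z = (G, P)"
        unfolding Y_def by auto
      have G: "G \<in> tfamilies t n" "card G = j" using GP by (auto simp: Fam_def)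
      have P: "P \<in> tpaths t n" "\<forall>Q\<in>G. pverts P \<inter> pverts Q = {}"
        using GP(2) by (auto simp: Avoid_def UF_def)
      have "P \<notin> G" using P tpath_parts(6)[OF P(1)] by auto
      have fin: "finite G" using tfam_elem_finite[OF G(1)] .
      have "insert P G \<in> tfamilies t n" using G(1) P by (auto simp: tfamilies_def)
      moreover have "card (insert P G) = Suc j" using \<open>P \<notin> G\<close> fin G by simp
      ultimately have "(insert P G, P) \<in> X" unfolding X_def Fam_def by auto
      moreover have "f (insert P G, P) = z" using \<open>P \<notin> G\<close> GP unfolding f_def by auto
      ultimately show "z \<in> f ` X" by force
    qed
  qed
  have "card X = card Y" using card_image[OF inj] img by simp
  then show ?thesis using cX cY by simp
qed

lemma Fam_card: "fact j * card (Fam n j) = ff n (k * j) ^ 2"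
proof (induction j)
  case 0 then show ?case by (simp add: Fam_0)
next
  case (Suc j)
  have "fact (Suc j) * card (Fam n (Suc j)) = fact j * (Suc j * card (Fam n (Suc j)))" by (simp add: algebra_simps)
  also have "\<dots> = fact j * card (Fam n j) * ff (n - k * j) k ^ 2" by (simp only: Fam_rec mult.assoc)
  also have "\<dots> = (ff n (k * j) * ff (n - k * j) k) ^ 2" using Suc by (simp add: power_mult_distrib)
  also have "\<dots> = ff n (k * Suc j) ^ 2" by (simp add: ff_add[symmetric] add.commute)
  finally show ?case .
qed

lemma mu_Fam: "mu t N = (if k dvd N then card (Fam N (N div k)) else 0)"
proof -
  have cov: "UF F = Kverts N \<longleftrightarrow> k * card F = N" if F: "F \<in> tfamilies t N" for F
  proof
    assume "UF F = Kverts N"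
    then have "{i. Inl i \<in> UF F} = {..<N}" by (auto simp: Kverts_def)
    then show "k * card F = N" using fam_parts(1)[OF F] by simp
  next
    assume e: "k * card F = N"
    have "{i. Inl i \<in> UF F} = {..<N}"
      using fam_parts(1,2)[OF F] e by (metis card_lessThan card_subset_eq finite_lessThan)
    moreover have "{i. Inr i \<in> UF F} = {..<N}"
      using fam_parts(3,4)[OF F] e by (metis card_lessThan card_subset_eq finite_lessThan)
    ultimately have "Kverts N \<subseteq> UF F" by (auto simp: Kverts_def)
    then show "UF F = Kverts N" using fam_parts(5)[OF F] by auto
  qed
  have "mu t N = card {F \<in> tfamilies t N. k * card F = N}"
    unfolding mu_def using cov by (metis (no_types, lifting) UF_def)
  also have "\<dots> = (if k dvd N then card (Fam N (N div k)) else 0)"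
  proof (cases "k dvd N")
    case True
    have "{F \<in> tfamilies t N. k * card F = N} = Fam N (N div k)"
      unfolding Fam_def using True k_pos by auto
    then show ?thesis using True by simp
  next
    case False
    then have e: "{F \<in> tfamilies t N. k * card F = N} = {}" by auto
    show ?thesis unfolding e using False by simp
  qed
  finally show ?thesis .
qed

lemma mu_fact: assumes "k dvd N" shows "fact (N div k) * mu t N = fact N ^ 2"
proof -
  have e: "k * (N div k) = N" using assms by simp
  have "mu t N = card (Fam N (N div k))" using assms by (simp add: mu_Fam)
  then show ?thesis using Fam_card[of "N div k" N] unfolding e ff_fact by simp
qed

lemma mu_nd: "\<not> k dvd N \<Longrightarrow> mu t N = 0"
  by (simp add: mu_Fam)

end


lemma pascal_sum:
  fixes g :: "nat \<Rightarrow> int"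
  shows "(\<Sum>j\<le>Suc N. (-1)^j * int (Suc N choose j) * g j) =
         (\<Sum>i\<le>N. (-1)^i * int (N choose i) * (g i - g (Suc i)))"
proof -
  have 1: "(\<Sum>i\<le>N. (-1)^i * int (N choose i) * g i) = (\<Sum>j\<le>Suc N. (-1)^j * int (N choose j) * g j)"
    by simp
  have 2: "(\<Sum>i\<le>N. (-1)^i * int (N choose i) * (- g (Suc i))) =
           (\<Sum>j\<le>Suc N. (-1)^j * int (if j = 0 then 0 else N choose (j - 1)) * g j)"
    by (subst sum.atMost_Suc_shift) simp
  have "(\<Sum>i\<le>N. (-1)^i * int (N choose i) * (g i - g (Suc i))) =
        (\<Sum>i\<le>N. (-1)^i * int (N choose i) * g i) + (\<Sum>i\<le>N. (-1)^i * int (N choose i) * (- g (Suc i)))"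
    by (simp add: sum.distrib[symmetric] algebra_simps)
  also have "\<dots> = (\<Sum>j\<le>Suc N. (-1)^j * int (N choose j) * g j + (-1)^j * int (if j = 0 then 0 else N choose (j - 1)) * g j)"
    unfolding 1 2 by (simp add: sum.distrib)
  also have "\<dots> = (\<Sum>j\<le>Suc N. (-1)^j * int (Suc N choose j) * g j)"
  proof (rule sum.cong)
    fix j assume "j \<in> {..Suc N}"
    show "(-1)^j * int (N choose j) * g j + (-1)^j * int (if j = 0 then 0 else N choose (j - 1)) * g j =
          (-1)^j * int (Suc N choose j) * g j"
    proof (cases j)
      case (Suc i) then show ?thesis by (simp add: algebra_simps)
    qed simp
  qed simp
  finally show ?thesis by simp
qed

definition dlt :: "int poly \<Rightarrow> int poly" where
  "dlt p = pcompose p [:1, 1:] - p"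

lemma poly_dlt: "poly (dlt p) x = poly p (x + 1) - poly p x"
  by (simp add: dlt_def poly_pcompose algebra_simps)

lemma dlt_pCons: "dlt (pCons a q) = dlt q + pCons 0 (dlt q) + q"
proof -
  have "pCons a q = [:a:] + pCons 0 q" by simp
  have "dlt (pCons a q) = [:a:] + [:1,1:] * pcompose q [:1,1:] - pCons a q"
    by (simp add: dlt_def pcompose_pCons)
  also have "\<dots> = dlt q + pCons 0 (dlt q) + q"
    by (simp add: dlt_def algebra_simps)
  finally show ?thesis .
qed

lemma dlt_const: "degree q = 0 \<Longrightarrow> dlt q = 0"
  by (metis dlt_def degree_eq_zeroE pcompose_const diff_self)

lemma dlt_deg: "degree p \<le> Suc N \<Longrightarrow> degree (dlt p) \<le> N \<and> coeff (dlt p) N = of_nat (Suc N) * coeff p (Suc N)"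
proof (induction N arbitrary: p)
  case 0
  obtain a q where p: "p = pCons a q" by (cases p)
  have dq: "degree q = 0" using 0 p by (cases "q = 0") auto
  then have "dlt p = q" using p by (simp add: dlt_pCons dlt_const)
  then show ?case using dq p by simp
next
  case (Suc N)
  obtain a q where p: "p = pCons a q" by (cases p)
  have dq: "degree q \<le> Suc N" using Suc.prems p by (cases "q = 0") auto
  from Suc.IH[OF dq] have ih: "degree (dlt q) \<le> N" "coeff (dlt q) N = of_nat (Suc N) * coeff q (Suc N)" by auto
  have e: "dlt p = dlt q + pCons 0 (dlt q) + q" using p by (simp add: dlt_pCons)
  have "degree (pCons 0 (dlt q)) \<le> Suc N" using ih by (cases "dlt q = 0") auto
  then have "degree (dlt p) \<le> Suc N" unfolding e using ih dq
    by (intro degree_add_le) auto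
  moreover have "coeff (dlt p) (Suc N) = of_nat (Suc (Suc N)) * coeff p (Suc (Suc N))"
  proof -
    have "coeff (dlt q) (Suc N) = 0" using ih by (simp add: coeff_eq_0)
    then show ?thesis unfolding e using ih p by (simp add: algebra_simps)
  qed
  ultimately show ?case by simp
qed

definition Sd :: "nat \<Rightarrow> int poly \<Rightarrow> int" where
  "Sd N p = (\<Sum>j\<le>N. (-1)^j * int (N choose j) * poly p (int j))"

lemma Sd_Suc: "Sd (Suc N) p = - Sd N (dlt p)"
proof -
  have "Sd (Suc N) p = (\<Sum>i\<le>N. (-1)^i * int (N choose i) * (poly p (int i) - poly p (int (Suc i))))"
    unfolding Sd_def by (rule pascal_sum)
  also have "\<dots> = - Sd N (dlt p)"
    unfolding Sd_def poly_dlt by (simp add: sum_negf[symmetric] algebra_simps)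
  finally show ?thesis .
qed

lemma Sd_main: "degree p \<le> N \<Longrightarrow> Sd N p = (-1)^N * fact N * coeff p N"
proof (induction N arbitrary: p)
  case 0
  then show ?case by (simp add: Sd_def poly_0_coeff_0)
next
  case (Suc N)
  have d: "degree (dlt p) \<le> N" "coeff (dlt p) N = of_nat (Suc N) * coeff p (Suc N)"
    using dlt_deg[OF Suc.prems] by auto
  have "Sd (Suc N) p = - Sd N (dlt p)" by (rule Sd_Suc)
  also have "\<dots> = - ((-1)^N * fact N * (of_nat (Suc N) * coeff p (Suc N)))" using Suc.IH[OF d(1)] d(2) by simp
  also have "\<dots> = (-1)^Suc N * fact (Suc N) * coeff p (Suc N)" by (simp add: algebra_simps)
  finally show ?case .
qed



lemma LL_bound: "degree p \<le> D \<Longrightarrow> LL t p = (\<Sum>i\<le>D. coeff p i * int (mu t i))"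
  unfolding LL_def by (rule sum.mono_neutral_left) (auto simp: coeff_eq_0)

lemma LL_add: "LL t (p + q) = LL t p + LL t q"
proof -
  define D where "D = max (degree p) (degree q)"
  have "degree (p + q) \<le> D" unfolding D_def by (rule degree_add_le) auto
  then have "LL t (p + q) = (\<Sum>i\<le>D. coeff (p + q) i * int (mu t i))" by (rule LL_bound)
  also have "\<dots> = (\<Sum>i\<le>D. coeff p i * int (mu t i)) + (\<Sum>i\<le>D. coeff q i * int (mu t i))"
    by (simp add: sum.distrib algebra_simps)
  also have "\<dots> = LL t p + LL t q"
  proof -
    have "LL t p = (\<Sum>i\<le>D. coeff p i * int (mu t i))" by (rule LL_bound) (simp add: D_def)
    moreover have "LL t q = (\<Sum>i\<le>D. coeff q i * int (mu t i))" by (rule LL_bound) (simp add: D_def)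
    ultimately show ?thesis by simp
  qed
  finally show ?thesis .
qed

lemma LL_0: "LL t 0 = 0" by (simp add: LL_def)

lemma LL_sum: "finite S \<Longrightarrow> LL t (\<Sum>j\<in>S. f j) = (\<Sum>j\<in>S. LL t (f j))"
  by (induction S rule: finite_induct) (simp_all add: LL_0 LL_add)

lemma LL_monom: "LL t (monom c e) = c * int (mu t e)"
proof -
  have "LL t (monom c e) = (\<Sum>i\<le>e. coeff (monom c e) i * int (mu t i))"
    by (rule LL_bound) (simp add: degree_monom_le)
  also have "\<dots> = (\<Sum>i\<le>e. (if i = e then c * int (mu t i) else 0))"
    by (rule sum.cong) (auto simp: coeff_monom)
  also have "\<dots> = c * int (mu t e)" by simp
  finally show ?thesis .
qed

lemma neg_pow_poly: "(- 1 :: int poly) ^ c * q = smult ((-1) ^ c) q"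
  by (induction c) (auto simp: algebra_simps)

definition pp :: "nat \<Rightarrow> nat \<Rightarrow> nat \<Rightarrow> int poly" where
  "pp m r k = (\<Prod>s<r. [:int m + int s + 1, - int k:]) ^ 2"

lemma poly_pp: "poly (pp m r k) x = (\<Prod>s<r. int m + int s + 1 - int k * x) ^ 2"
  by (simp add: pp_def poly_prod algebra_simps)

lemma pp_zero:
  assumes "m < k * j" "k * j \<le> m + r"
  shows "poly (pp m r k) (int j) = 0"
proof -
  define s0 where "s0 = k * j - m - 1"
  have "s0 < r" using assms unfolding s0_def by simp
  moreover have "int m + int s0 + 1 - int k * int j = 0" using assms unfolding s0_def by simp
  ultimately have "(\<Prod>s<r. int m + int s + 1 - int k * int j) = 0"
    by (intro prod_zero) auto
  then show ?thesis by (simp add: poly_pp)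
qed

lemma pp_deg: "degree (pp m r k) \<le> 2 * r"
proof -
  have "degree (\<Prod>s<r. [:int m + int s + 1, - int k:]) \<le> sum (degree \<circ> (\<lambda>s. [:int m + int s + 1, - int k:])) {..<r}"
    by (rule degree_prod_sum_le) simp
  also have "\<dots> \<le> (\<Sum>s<r. 1)" by (intro sum_mono) auto
  finally have "degree (\<Prod>s<r. [:int m + int s + 1, - int k:]) \<le> r" by simp
  moreover have "degree ((\<Prod>s<r. [:int m + int s + 1, - int k:]) ^ 2) \<le> degree (\<Prod>s<r. [:int m + int s + 1, - int k:]) * 2"
    by (rule degree_power_le)
  ultimately show ?thesis unfolding pp_def by linarith
qed

lemma pp_coeff:
  assumes "k \<ge> 1"
  shows "coeff (pp m r k) (2 * r) = int k ^ (2 * r)"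
proof -
  let ?q = "\<Prod>s<r. [:int m + int s + 1, - int k:]"
  have nz: "\<forall>s\<in>{..<r}. [:int m + int s + 1, - int k:] \<noteq> 0" using assms by auto
  have dq: "degree ?q = r" using degree_prod_eq_sum_degree[OF nz] assms by simp
  have lq: "lead_coeff ?q = (- int k) ^ r" using assms by (simp add: lead_coeff_prod)
  have "?q \<noteq> 0" using lq assms by auto
  then have "degree (pp m r k) = 2 * r" unfolding pp_def using dq by (simp add: degree_power_eq)
  moreover have "lead_coeff (pp m r k) = ((- int k) ^ r) ^ 2" unfolding pp_def using lq by (simp add: lead_coeff_power)
  ultimately show ?thesis by (simp add: power_mult_distrib power_mult[symmetric] mult.commute)
qed

lemma ff_fact_mul: "a \<le> m \<Longrightarrow> ff m a * fact (m - a) = fact m"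
proof (induction a)
  case (Suc a)
  have e: "m - a = Suc (m - Suc a)" using Suc.prems by simp
  have "fact (m - a) = (m - a) * fact (m - Suc a)" unfolding e by simp
  then show ?case using Suc by (simp add: ff_Suc)
qed simp

lemma fact_add_prod: "fact (x + r) = fact x * (\<Prod>s<r. x + s + 1)"
  by (induction r) (simp_all add: algebra_simps)



context tk begin

lemma kk: "(t + 1) div 2 = k" using tk by simp

lemma fam_card_le: "F \<in> tfamilies t m \<Longrightarrow> card F \<le> m"
proof -
  assume F: "F \<in> tfamilies t m"
  have "k * card F = card {i. Inl i \<in> UF F}" using fam_parts(1)[OF F] by simp
  also have "\<dots> \<le> card {..<m}" using fam_parts(2)[OF F] by (intro card_mono) auto
  finally have "k * card F \<le> m" by simp
  moreover have "card F \<le> k * card F" using k_pos by simp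
  ultimately show ?thesis by linarith
qed

lemma Lpoly_form: "Lpoly t m = (\<Sum>j\<le>m. monom ((-1)^j * int (card (Fam m j))) (m - k*j))"
proof -
  have "Lpoly t m = (\<Sum>F\<in>tfamilies t m. monom ((-1) ^ card F) (m - k * card F))"
    unfolding Lpoly_def kk by (intro sum.cong refl) (simp add: neg_pow_poly monom_altdef)
  also have "\<dots> = (\<Sum>j\<le>m. \<Sum>F\<in>{F. F \<in> tfamilies t m \<and> card F = j}. monom ((-1) ^ card F) (m - k * card F))"
    by (rule sum.group[symmetric]) (auto simp: tfam_finite fam_card_le)
  also have "\<dots> = (\<Sum>j\<le>m. monom ((-1)^j * int (card (Fam m j))) (m - k*j))"
  proof (rule sum.cong[OF refl])
    fix j
    have "(\<Sum>F\<in>{F. F \<in> tfamilies t m \<and> card F = j}. monom ((-1) ^ card F) (m - k * card F))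
        = (\<Sum>F\<in>Fam m j. monom ((-1) ^ j) (m - k * j))"
      unfolding Fam_def by (intro sum.cong) auto
    also have "\<dots> = monom ((-1)^j * int (card (Fam m j))) (m - k*j)"
      by (simp add: of_nat_mult_conv_smult smult_monom mult.commute)
    finally show "(\<Sum>F\<in>{F. F \<in> tfamilies t m \<and> card F = j}. monom ((-1) ^ card F) (m - k * card F))
        = monom ((-1)^j * int (card (Fam m j))) (m - k*j)" .
  qed
  finally show ?thesis .
qed

definition G :: "nat \<Rightarrow> nat \<Rightarrow> int" where
  "G r m = (\<Sum>j\<le>m. (-1)^j * int (card (Fam m j)) * int (mu t (r + (m - k*j))))"

lemma LL_X: "LL t (monom a r * Lpoly t m) = a * G r m"
proof -
  have "monom a r * Lpoly t m = (\<Sum>j\<le>m. monom (a * ((-1)^j * int (card (Fam m j)))) (r + (m - k*j)))"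
    unfolding Lpoly_form by (simp add: sum_distrib_left mult_monom)
  then have "LL t (monom a r * Lpoly t m) = (\<Sum>j\<le>m. a * ((-1)^j * int (card (Fam m j))) * int (mu t (r + (m - k*j))))"
    by (simp add: LL_sum LL_monom)
  also have "\<dots> = a * G r m" unfolding G_def by (simp add: sum_distrib_left algebra_simps)
  finally show ?thesis .
qed

lemma LL_prod: "LL t (Lpoly t m * Lpoly t n) = (\<Sum>j\<le>n. (-1)^j * int (card (Fam n j)) * G (n - k*j) m)"
proof -
  have "Lpoly t m * Lpoly t n = (\<Sum>j\<le>n. monom ((-1)^j * int (card (Fam n j))) (n - k*j) * Lpoly t m)"
    by (subst (2) Lpoly_form) (simp add: sum_distrib_left mult.commute)
  then show ?thesis by (simp add: LL_sum LL_X)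
qed

lemma Fam_zero: "m < k * j \<Longrightarrow> card (Fam m j) = 0"
proof -
  assume "m < k * j"
  then have "fact j * card (Fam m j) = 0" using Fam_card[of j m] ff_zero by simp
  then show ?thesis by simp
qed

lemma G_nd: "\<not> k dvd (r + m) \<Longrightarrow> G r m = 0"
  unfolding G_def
proof (intro sum.neutral ballI)
  fix j assume nd: "\<not> k dvd (r + m)" and "j \<in> {..m}"
  show "(-1)^j * int (card (Fam m j)) * int (mu t (r + (m - k*j))) = 0"
  proof (cases "k * j \<le> m")
    case True
    have "\<not> k dvd (r + (m - k*j))"
    proof
      assume "k dvd (r + (m - k*j))"
      then have "k dvd (r + (m - k*j) + k * j)" by simp
      then show False using nd True by simp
    qed
    then show ?thesis using mu_nd by simp
  next
    case False then show ?thesis using Fam_zero by simp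
  qed
qed

lemma G_main:
  assumes dv: "k dvd (r + m)" and N: "N = (r + m) div k" and le: "2 * r \<le> N"
  shows "G r m = int (fact m) ^ 2 * (-1)^N * coeff (pp m r k) N"
proof -
  have kN: "k * N = r + m" using dv N by simp
  define T where "T j = (-1)^j * int (N choose j) * poly (pp m r k) (int j)" for j
  have trm: "int (fact N) * ((-1)^j * int (card (Fam m j)) * int (mu t (r + (m - k*j)))) =
              int (fact m) ^ 2 * (if j \<le> N then T j else 0)" if "j \<le> m" for j
  proof (cases "k * j \<le> m")
    case False
    then have "card (Fam m j) = 0" using Fam_zero by simp
    moreover have "T j = 0" if jN: "j \<le> N"
    proof -
      have "k * j \<le> k * N" using jN by simp
      then have "k * j \<le> m + r" using kN by simp
      then show ?thesis unfolding T_def using False pp_zero by simp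
    qed
    ultimately show ?thesis by simp
  next
    case True
    have "k * j \<le> k * N" using True kN by simp
    then have jN: "j \<le> N" using k_pos by simp
    have e1: "fact N = (N choose j) * fact j * fact (N - j)"
      using binomial_fact_lemma[OF jN] by (simp add: algebra_simps)
    have e2: "fact j * card (Fam m j) = ff m (k*j) ^ 2" by (rule Fam_card)
    have e3: "r + (m - k*j) = k * (N - j)" using kN True by (simp add: diff_mult_distrib2)
    have e4: "fact (N - j) * mu t (r + (m - k*j)) = fact (r + (m - k*j)) ^ 2"
      using mu_fact[of "r + (m - k*j)"] e3 k_pos by simp
    have e5: "ff m (k*j) * fact (r + (m - k*j)) = fact m * (\<Prod>s<r. m - k*j + s + 1)"
    proof -
      have "fact (r + (m - k*j)) = fact (m - k*j) * (\<Prod>s<r. m - k*j + s + 1)"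
        using fact_add_prod[of "m - k*j" r] by (simp add: add.commute)
      then show ?thesis using ff_fact_mul[OF True] by (simp add: mult.assoc[symmetric])
    qed
    have nat_eq: "fact N * (card (Fam m j) * mu t (r + (m - k*j))) =
                  (N choose j) * (fact m * (\<Prod>s<r. m - k*j + s + 1)) ^ 2"
    proof -
      have "fact N * (card (Fam m j) * mu t (r + (m - k*j))) =
            (N choose j) * ((fact j * card (Fam m j)) * (fact (N - j) * mu t (r + (m - k*j))))"
        unfolding e1 by (simp add: algebra_simps)
      also have "\<dots> = (N choose j) * (ff m (k*j) * fact (r + (m - k*j))) ^ 2"
        unfolding e2 e4 by (simp add: power_mult_distrib)
      finally show ?thesis unfolding e5 .
    qed
    have prod_eq: "int (\<Prod>s<r. m - k*j + s + 1) = (\<Prod>s<r. int m + int s + 1 - int k * int j)"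
      using True by (simp add: of_nat_diff) (intro prod.cong refl, simp)
    have "int (fact N) * ((-1)^j * int (card (Fam m j)) * int (mu t (r + (m - k*j)))) =
          (-1)^j * int (fact N * (card (Fam m j) * mu t (r + (m - k*j))))"
      by (simp add: algebra_simps)
    also have "\<dots> = (-1)^j * (int (N choose j) * (int (fact m) * int (\<Prod>s<r. m - k*j + s + 1)) ^ 2)"
      unfolding nat_eq by simp
    also have "\<dots> = int (fact m) ^ 2 * T j"
      unfolding T_def prod_eq poly_pp by (simp add: power_mult_distrib algebra_simps)
    finally show ?thesis using jN by simp
  qed
  have "int (fact N) * G r m = (\<Sum>j\<le>m. int (fact m) ^ 2 * (if j \<le> N then T j else 0))"
    unfolding G_def sum_distrib_left
  proof (rule sum.cong[OF refl])
    fix j assume "j \<in> {..m}"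
    then show "int (fact N) * ((-1)^j * int (card (Fam m j)) * int (mu t (r + (m - k*j)))) =
              int (fact m) ^ 2 * (if j \<le> N then T j else 0)" using trm[of j] by simp
  qed
  also have "\<dots> = int (fact m) ^ 2 * (\<Sum>j\<le>m. (if j \<in> {..N} then T j else 0))"
    by (simp add: sum_distrib_left)
  also have "(\<Sum>j\<le>m. (if j \<in> {..N} then T j else 0)) = (\<Sum>j\<in>{..m} \<inter> {..N}. T j)"
    by (rule sum.inter_restrict[symmetric]) simp
  also have "\<dots> = (\<Sum>j\<le>N. T j)"
  proof (rule sum.mono_neutral_left)
    show "\<forall>i\<in>{..N} - {..m} \<inter> {..N}. T i = 0"
    proof
      fix i assume i: "i \<in> {..N} - {..m} \<inter> {..N}"
      then have "m < i" "i \<le> N" by auto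
      moreover have "i \<le> k * i" using k_pos by simp
      moreover have "k * i \<le> k * N" using \<open>i \<le> N\<close> by simp
      ultimately have "m < k * i" "k * i \<le> m + r" using kN by linarith+
      then show "T i = 0" unfolding T_def using pp_zero by simp
    qed
  qed auto
  also have "\<dots> = Sd N (pp m r k)" unfolding Sd_def T_def by simp
  also have "\<dots> = (-1)^N * fact N * coeff (pp m r k) N"
    by (rule Sd_main) (use pp_deg[of m r k] le in linarith)
  finally have "int (fact N) * G r m = int (fact N) * (int (fact m) ^ 2 * (-1)^N * coeff (pp m r k) N)"
    by (simp add: algebra_simps)
  then show ?thesis by simp
qed

lemma G_Z: assumes "r * t < m" shows "G r m = 0"
proof (cases "k dvd (r + m)")
  case False then show ?thesis by (rule G_nd)
next
  case True
  define N where "N = (r + m) div k"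
  have kN: "k * N = r + m" using True N_def by simp
  have "r * Suc t = r * (2 * k)" by (simp only: tk)
  then have "k * (2 * r) = r + r * t" by (simp add: algebra_simps)
  then have "k * (2 * r) < k * N" using kN assms by linarith
  then have lt: "2 * r < N" by simp
  have "coeff (pp m r k) N = 0" using pp_deg[of m r k] lt by (simp add: coeff_eq_0)
  then show ?thesis using G_main[OF True N_def] lt by simp
qed

lemma G_V: "G r (r * t) = int (fact (r * t)) ^ 2 * int k ^ (2 * r)"
proof -
  have "r * Suc t = r * (2 * k)" by (simp only: tk)
  then have e: "r + r * t = k * (2 * r)" by (simp add: algebra_simps)
  then have dv: "k dvd (r + r * t)" by simp
  have N: "2 * r = (r + r * t) div k" using e k_pos by simp
  show ?thesis using G_main[OF dv N] pp_coeff[OF k_pos] by simp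
qed

end


lemma choose_k: assumes "Suc t = 2 * k" shows "(t choose k) * fact k ^ 2 = fact t * k"
proof -
  have k1: "k \<ge> 1" using assms by simp
  have tk: "t - k = k - 1" using assms by simp
  have "fact k * fact (t - k) * (t choose k) = fact t" by (rule binomial_fact_lemma) (use assms in simp)
  moreover have "fact k = k * fact (k - 1)" using fact_reduce[of k, where 'a=nat] k1 by simp
  ultimately show ?thesis unfolding tk by (simp add: power2_eq_square algebra_simps)
qed

lemma prod_choose: "(\<Prod>i<n. ((n - i) * t choose t)) * fact t ^ n = fact (n * t)"
proof (induction n)
  case (Suc n)
  have "(\<Prod>i<Suc n. ((Suc n - i) * t choose t)) = (Suc n * t choose t) * (\<Prod>i<n. ((n - i) * t choose t))"
    by (subst prod.lessThan_Suc_shift) simp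
  moreover have "(Suc n * t choose t) * fact t * fact (n * t) = fact (Suc n * t)"
  proof -
    have "fact t * fact (n * t + t - t) * (n * t + t choose t) = fact (n * t + t)"
      by (rule binomial_fact_lemma) simp
    then show ?thesis by (simp add: algebra_simps)
  qed
  ultimately show ?case using Suc by (simp add: algebra_simps)
qed simp

lemma prod_identity:
  assumes "Suc t = 2 * k"
  shows "(\<Prod>i<n. (int (((n - i) * t choose t) * (t choose k) * (fact k) ^ 2)) ^ 2) =
         int (fact (n * t)) ^ 2 * int k ^ (2 * n)"
proof -
  have "(\<Prod>i<n. ((n - i) * t choose t) * (t choose k) * (fact k) ^ 2) =
        (\<Prod>i<n. ((n - i) * t choose t) * (fact t * k))"
    using choose_k[OF assms] by (simp add: mult.assoc)
  also have "\<dots> = (\<Prod>i<n. ((n - i) * t choose t)) * fact t ^ n * k ^ n"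
    by (simp add: prod.distrib power_mult_distrib mult.assoc)
  also have "\<dots> = fact (n * t) * k ^ n" by (simp add: prod_choose)
  finally have e: "(\<Prod>i<n. ((n - i) * t choose t) * (t choose k) * (fact k) ^ 2) = fact (n * t) * k ^ n" .
  have "(\<Prod>i<n. (int (((n - i) * t choose t) * (t choose k) * (fact k) ^ 2)) ^ 2) =
        (int (\<Prod>i<n. ((n - i) * t choose t) * (t choose k) * (fact k) ^ 2)) ^ 2"
    by (simp add: prod_power_distrib)
  also have "\<dots> = int (fact (n * t)) ^ 2 * int k ^ (2 * n)"
    unfolding e by (simp add: power_mult_distrib power_mult mult.commute)
  finally show ?thesis .
qed

theorem mainTheorem17:
  fixes t :: nat
  assumes "odd t"
  defines "k \<equiv> (t + 1) div 2"
  shows "(\<forall>n m. m > n * t \<longrightarrow> LL t (Lpoly t m * Lpoly t n) = 0) \<and>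
         (\<forall>n. LL t (Lpoly t (n * t) * Lpoly t n) =
               (\<Prod>i<n. (int (((n - i) * t choose t) * (t choose k) * (fact k) ^ 2)) ^ 2))"
proof -
  have tk': "Suc t = 2 * k" using assms(1) unfolding k_def by (auto elim: oddE)
  interpret tk t k by unfold_locales (rule tk')
  have t1: "t \<ge> 1" using assms(1) by (cases t) auto
  have P1: "LL t (Lpoly t m * Lpoly t n) = 0" if mn: "m > n * t" for n m
  proof -
    have "LL t (Lpoly t m * Lpoly t n) = (\<Sum>j\<le>n. (-1)^j * int (card (Fam n j)) * G (n - k*j) m)"
      by (rule LL_prod)
    also have "\<dots> = 0"
    proof (rule sum.neutral, rule ballI)
      fix j assume "j \<in> {..n}"
      show "(-1)^j * int (card (Fam n j)) * G (n - k*j) m = 0"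
      proof (cases "k * j \<le> n")
        case True
        have "(n - k*j) * t \<le> n * t" by simp
        then have "G (n - k*j) m = 0" using mn by (intro G_Z) linarith
        then show ?thesis by simp
      next
        case False then show ?thesis using Fam_zero by simp
      qed
    qed
    finally show ?thesis .
  qed
  have P2: "LL t (Lpoly t (n * t) * Lpoly t n) = int (fact (n * t)) ^ 2 * int k ^ (2 * n)" for n
  proof -
    let ?f = "\<lambda>j. (-1)^j * int (card (Fam n j)) * G (n - k*j) (n * t)"
    have "LL t (Lpoly t (n * t) * Lpoly t n) = (\<Sum>j\<le>n. ?f j)" by (rule LL_prod)
    also have "\<dots> = ?f 0 + (\<Sum>j\<in>{..n} - {0}. ?f j)" by (rule sum.remove) auto
    also have "(\<Sum>j\<in>{..n} - {0}. ?f j) = 0"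
    proof (rule sum.neutral, rule ballI)
      fix j assume j: "j \<in> {..n} - {0}"
      show "?f j = 0"
      proof (cases "k * j \<le> n")
        case True
        have kj1: "k * j \<ge> 1" using j k_pos by simp
        have n0: "0 < n" using kj1 True by linarith
        have "n - k*j < n" using n0 kj1 by (intro diff_less) auto
        then have "(n - k*j) * t < n * t" using t1 by simp
        then have "G (n - k*j) (n * t) = 0" by (rule G_Z)
        then show ?thesis by simp
      next
        case False then show ?thesis using Fam_zero by simp
      qed
    qed
    also have "?f 0 = int (fact (n * t)) ^ 2 * int k ^ (2 * n)"
      using G_V[of n] by (simp add: Fam_0)
    finally show ?thesis by simp
  qed
  show ?thesis using P1 P2 prod_identity[OF tk'] by simp
qed


end
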